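(* Let $\eta>0$. For all sufficiently large $\ell$, the fundamental eigenvalue $\omega_\ell^2$ satisfies $$\frac{k^2}{2}\le\frac{\omega_\ell^2}{\ell(\ell+1)}\le k^2+\eta.$$
   Context: Fix $M>0$, $k>0$; $\Delta(r)=r^2+k^2r^4-2Mr$, $w:=\Delta/r^4$, viewed as a function of $r^\star$ defined by $dr^\star/dr=r^2/\Delta$, $r^\star(r=+\infty)=\pi/2$; $r^\star_{3M}=r^\star(r=3M)$; prime is $d/dr^\star$. For $\ell\ge2$, $\omega_\ell^2$ is defined as $$\omega_\ell^2=\inf_{R\in H^1_0((r^\star_{3M},\pi/2])\setminus\{0\}}\frac{\int_{r^\star_{3M}}^{\pi/2}\big((R')^2+w(\ell(\ell+1)-\frac{6M}{r})R^2\big)dr^\star+\frac{6Mk^2}{\ell(\ell+1)-2}R(\frac\pi2)^2}{\int_{r^\star_{3M}}^{\pi/2}R^2\,dr^\star+\frac{12M}{\ell(\ell+1)(\ell(\ell+1)-2)}R(\frac\pi2)^2},$$ where $H^1_0((r^\star_{3M},\pi/2])$ is the $H^1$-closure of smooth functions compactly supported in $(r^\star_{3M},\pi/2]$; this infimum is attained and is the lowest eigenvalue of $\omega^2R=-R''+w(\ell(\ell+1)-\frac{6M}{r})R$, $R(r^\star_{3M})=0$, $(-2\omega^2R+\frac{\ell(\ell+1)(\ell(\ell+1)-2)}{6M}R'+k^2\ell(\ell+1)R)(\pi/2)=0$. *)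

theory Defs
  imports "HOL-Analysis.Analysis"
begin

definition Delta :: "real \<Rightarrow> real \<Rightarrow> real \<Rightarrow> real" where
  "Delta M k r = r^2 + k^2 * r^4 - 2 * M * r"

definition wr :: "real \<Rightarrow> real \<Rightarrow> real \<Rightarrow> real" where
  "wr M k r = Delta M k r / r^4"

text \<open>tortoise coordinate: dr*/dr = r^2/Delta, r*(+infinity) = pi/2, i.e.
  r*(r) = pi/2 - integral over [r,infinity) of s^2/Delta(s)\<close>
definition rstar :: "real \<Rightarrow> real \<Rightarrow> real \<Rightarrow> real" where
  "rstar M k r = pi / 2 - integral {r..} (\<lambda>s. s^2 / Delta M k s)"

definition r_of :: "real \<Rightarrow> real \<Rightarrow> real \<Rightarrow> real" where
  "r_of M k x = (THE r. r \<ge> 3 * M \<and> rstar M k r = x)"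

definition rstar3M :: "real \<Rightarrow> real \<Rightarrow> real" where
  "rstar3M M k = rstar M k (3 * M)"

definition smooth_fun :: "(real \<Rightarrow> real) \<Rightarrow> bool" where
  "smooth_fun f \<longleftrightarrow> (\<forall>n x. ((deriv ^^ n) f) differentiable (at x))"

text \<open>smooth functions (restricted to [a,b]) whose support is a compact subset of (a,b]\<close>
definition test_fun :: "real \<Rightarrow> real \<Rightarrow> (real \<Rightarrow> real) \<Rightarrow> bool" where
  "test_fun a b \<phi> \<longleftrightarrow> smooth_fun \<phi> \<and> (\<exists>\<delta>>0. \<forall>x\<le>a+\<delta>. \<phi> x = 0)"

text \<open>(R, g) with R continuous on [a,b] lies in the H^1-closure of the test functions,
  with g the (weak) derivative R': there are test functions phi_n with
  phi_n \<rightarrow> R and phi_n' \<rightarrow> g in L^2(a,b).  R is the continuous representative, so the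
  boundary value R(b) is meaningful.\<close>
definition H10 :: "real \<Rightarrow> real \<Rightarrow> (real \<Rightarrow> real) \<Rightarrow> (real \<Rightarrow> real) \<Rightarrow> bool" where
  "H10 a b R g \<longleftrightarrow> continuous_on {a..b} R \<and>
     (\<exists>\<phi>::nat \<Rightarrow> real \<Rightarrow> real. (\<forall>n. test_fun a b (\<phi> n)) \<and>
        (\<forall>n. (\<lambda>x. (\<phi> n x - R x)^2) integrable_on {a..b}) \<and>
        (\<forall>n. (\<lambda>x. (deriv (\<phi> n) x - g x)^2) integrable_on {a..b}) \<and>
        (\<lambda>n. integral {a..b} (\<lambda>x. (\<phi> n x - R x)^2)
              + integral {a..b} (\<lambda>x. (deriv (\<phi> n) x - g x)^2)) \<longlonglongrightarrow> 0)"

definition rayleigh :: "real \<Rightarrow> real \<Rightarrow> nat \<Rightarrow> (real \<Rightarrow> real) \<Rightarrow> (real \<Rightarrow> real) \<Rightarrow> real" where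
  "rayleigh M k l R g =
     (let a = rstar3M M k; b = pi / 2; L = real l * (real l + 1) in
      (integral {a..b} (\<lambda>x. (g x)^2 + wr M k (r_of M k x) * (L - 6 * M / r_of M k x) * (R x)^2)
        + 6 * M * k^2 / (L - 2) * (R b)^2)
      / (integral {a..b} (\<lambda>x. (R x)^2) + 12 * M / (L * (L - 2)) * (R b)^2))"

definition omega2 :: "real \<Rightarrow> real \<Rightarrow> nat \<Rightarrow> real" where
  "omega2 M k l = Inf {rayleigh M k l R g | R g.
      H10 (rstar3M M k) (pi / 2) R g \<and> (\<exists>x\<in>{rstar3M M k .. pi / 2}. R x \<noteq> 0)}"

end

theory Submission
  imports Defs "HOL-Computational_Algebra.Polynomial"
begin


definition Fp :: "real poly \<Rightarrow> real \<Rightarrow> real \<Rightarrow> real" where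
  "Fp p c t = (if t > c then poly p (1 / (t - c)) * exp (- 1 / (t - c)) else 0)"

lemma poly_exp_lim: "((\<lambda>u. poly q u / exp u) \<longlongrightarrow> (0::real)) at_top"
proof -
  have "((\<lambda>u. \<Sum>i\<le>degree q. coeff q i * (u ^ i / exp u)) \<longlongrightarrow> (\<Sum>i\<le>degree q. coeff q i * 0)) at_top"
    by (intro tendsto_sum tendsto_mult tendsto_const tendsto_power_div_exp_0)
  then show ?thesis
    by (simp add: poly_altdef sum_divide_distrib)
qed

lemma Fp_right_lim: "((\<lambda>h. poly p (1 / h) * exp (- 1 / h) / h) \<longlongrightarrow> (0::real)) (at_right 0)"
proof -
  have "((\<lambda>h. (\<lambda>u. poly (pCons 0 p) u / exp u) (inverse h)) \<longlongrightarrow> 0) (at_right 0)"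
    by (rule filterlim_compose[OF poly_exp_lim filterlim_inverse_at_top_right])
  moreover have "eventually (\<lambda>h. (\<lambda>u. poly (pCons 0 p) u / exp u) (inverse h) = poly p (1 / h) * exp (- 1 / h) / h) (at_right 0)"
    by (intro always_eventually allI) (simp add: exp_minus divide_inverse mult_ac)
  ultimately show ?thesis
    by (rule Lim_transform_eventually)
qed

definition stepq :: "real poly \<Rightarrow> real poly" where
  "stepq p = [:0,0,1:] * (p - pderiv p)"

lemma Fp_deriv_pos:
  assumes "t > c"
  shows "(Fp p c has_field_derivative Fp (stepq p) c t) (at t)"
proof -
  have d0: "((\<lambda>t. poly p (1 / (t - c)) * exp (- 1 / (t - c))) has_field_derivative
     (poly (pderiv p) (1 / (t - c)) * (- 1 / (t - c)^2) * exp (- 1 / (t - c))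
      + poly p (1 / (t - c)) * (exp (- 1 / (t - c)) * (1 / (t - c)^2)))) (at t)"
    using assms
    by (auto intro!: derivative_eq_intros simp: power2_eq_square)
  have e: "poly (pderiv p) (1 / (t - c)) * (- 1 / (t - c)^2) * exp (- 1 / (t - c))
      + poly p (1 / (t - c)) * (exp (- 1 / (t - c)) * (1 / (t - c)^2)) = Fp (stepq p) c t"
    using assms by (simp add: Fp_def stepq_def algebra_simps power2_eq_square)
  have d: "((\<lambda>t. poly p (1 / (t - c)) * exp (- 1 / (t - c))) has_field_derivative Fp (stepq p) c t) (at t)"
    using d0 e by simp
  show ?thesis
    by (rule has_field_derivative_transform_within_open[OF d, of "{c<..}"]) (use assms in \<open>auto simp: Fp_def\<close>)
qed

lemma Fp_deriv_neg:
  assumes "t < c"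
  shows "(Fp p c has_field_derivative Fp (stepq p) c t) (at t)"
proof -
  have d: "((\<lambda>t. 0) has_field_derivative Fp (stepq p) c t) (at t)"
    using assms by (simp add: Fp_def)
  show ?thesis
    by (rule has_field_derivative_transform_within_open[OF d, of "{..<c}"]) (use assms in \<open>auto simp: Fp_def\<close>)
qed

lemma Fp_deriv_zero:
  shows "(Fp p c has_field_derivative Fp (stepq p) c c) (at c)"
proof -
  have r: "((\<lambda>h. (Fp p c (c + h) - Fp p c c) / h) \<longlongrightarrow> 0) (at_right 0)"
  proof -
    have "eventually (\<lambda>h. poly p (1 / h) * exp (- 1 / h) / h = (Fp p c (c + h) - Fp p c c) / h) (at_right 0)"
      using eventually_at_right_less[of "0::real"] by eventually_elim (simp add: Fp_def)
    then show ?thesis by (rule Lim_transform_eventually[OF Fp_right_lim])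
  qed
  have l: "((\<lambda>h. (Fp p c (c + h) - Fp p c c) / h) \<longlongrightarrow> 0) (at_left 0)"
  proof -
    have "eventually (\<lambda>h. 0 = (Fp p c (c + h) - Fp p c c) / h) (at_left 0)"
      using eventually_at_left_real[of "-1" 0, OF neg_less_0_iff_less[THEN iffD2, OF zero_less_one]] by eventually_elim (simp add: Fp_def)
    then show ?thesis by (rule Lim_transform_eventually[OF tendsto_const])
  qed
  have "((\<lambda>h. (Fp p c (c + h) - Fp p c c) / h) \<longlongrightarrow> 0) (at 0)"
    using r l by (simp add: filterlim_at_split)
  moreover have "Fp (stepq p) c c = 0" by (simp add: Fp_def)
  ultimately show ?thesis by (simp add: DERIV_def)
qed

lemma Fp_deriv: "(Fp p c has_field_derivative Fp (stepq p) c t) (at t)"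
  using Fp_deriv_pos Fp_deriv_neg Fp_deriv_zero by (metis linorder_neqE_linordered_idom)

lemma deriv_Fp: "deriv (Fp p c) = Fp (stepq p) c"
  using Fp_deriv DERIV_imp_deriv by blast

lemma iter_deriv_Fp: "(deriv ^^ n) (Fp p c) = Fp ((stepq ^^ n) p) c"
  by (induction n) (auto simp: deriv_Fp)

lemma smooth_Fp: "smooth_fun (Fp p c)"
  unfolding smooth_fun_def iter_deriv_Fp
  using Fp_deriv real_differentiable_def by blast


context
  fixes M k :: real
  assumes M: "M > 0" and k: "k > 0"
begin

lemma Delta_ge: "s \<ge> 3 * M \<Longrightarrow> Delta M k s \<ge> k^2 * s^4 + s^2 / 3"
proof -
  assume s: "s \<ge> 3 * M"
  have "2 * M * s \<le> 2 * s^2 / 3" using s M by (simp add: power2_eq_square)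
  then show ?thesis by (simp add: Delta_def)
qed

lemma Delta_le: "s \<ge> 0 \<Longrightarrow> Delta M k s \<le> s^2 + k^2 * s^4"
  using M by (simp add: Delta_def)

lemma Delta_pos: "s \<ge> 3 * M \<Longrightarrow> Delta M k s > 0"
proof -
  assume s: "s \<ge> 3 * M"
  have "s > 0" using s M by simp
  then have "k^2 * s^4 + s^2 / 3 > 0" using k by (simp add: add_nonneg_pos)
  then show ?thesis using Delta_ge[OF s] by linarith
qed

lemma f_le_inv: "s \<ge> 3 * M \<Longrightarrow> s^2 / Delta M k s \<le> 1 / k^2 * (1 / s^2)"
proof -
  assume s: "s \<ge> 3 * M"
  have sp: "s > 0" using s M by simp
  have "s^2 / 3 \<ge> 0" by simp
  then have "Delta M k s \<ge> k^2 * s^4" using Delta_ge[OF s] by linarith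
  then have "s^2 / Delta M k s \<le> s^2 / (k^2 * s^4)"
    using sp k Delta_pos[OF s] by (intro divide_left_mono) auto
  also have "\<dots> = 1 / k^2 * (1 / s^2)" using sp by (simp add: field_simps power2_eq_square power4_eq_xxxx)
  finally show ?thesis .
qed

lemma f_le3: "s \<ge> 3 * M \<Longrightarrow> s^2 / Delta M k s \<le> 3"
proof -
  assume s: "s \<ge> 3 * M"
  have sp: "s > 0" using s M by simp
  have "k^2 * s^4 \<ge> 0" by simp
  then have "Delta M k s \<ge> s^2 / 3" using Delta_ge[OF s] by linarith
  then have "s^2 / Delta M k s \<le> s^2 / (s^2 / 3)"
    using sp Delta_pos[OF s] by (intro divide_left_mono) auto
  also have "\<dots> = 3" using sp by simp
  finally show ?thesis .
qed

lemma f_ge: "s \<ge> 3 * M \<Longrightarrow> s^2 / Delta M k s \<ge> 1 / (1 + k^2 * s^2)"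
proof -
  assume s: "s \<ge> 3 * M"
  have sp: "s > 0" using s M by simp
  have "s^2 / Delta M k s \<ge> s^2 / (s^2 + k^2 * s^4)"
    using sp Delta_le[of s] Delta_pos[OF s] by (intro divide_left_mono) auto
  also have "s^2 + k^2 * s^4 = s^2 * (1 + k^2 * s^2)"
    by (simp add: algebra_simps power2_eq_square power4_eq_xxxx)
  then have "s^2 / (s^2 + k^2 * s^4) = 1 / (1 + k^2 * s^2)" using sp
    by simp
  finally show ?thesis .
qed

lemma f_pos: "s \<ge> 3 * M \<Longrightarrow> s^2 / Delta M k s > 0"
  using Delta_pos M by simp

lemma f_cont: "continuous_on {3 * M..} (\<lambda>s. s^2 / Delta M k s)"
proof (rule continuous_on_divide)
  show "continuous_on {3 * M..} (\<lambda>s. Delta M k s)" unfolding Delta_def by (intro continuous_intros)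
  show "\<forall>s\<in>{3 * M..}. Delta M k s \<noteq> 0" using Delta_pos by force
qed (intro continuous_intros)

lemma f_integrable: "r \<ge> 3 * M \<Longrightarrow> (\<lambda>s. s^2 / Delta M k s) integrable_on {r..}"
  and f_integral_le: "r \<ge> 3 * M \<Longrightarrow> integral {r..} (\<lambda>s. s^2 / Delta M k s) \<le> 1 / (k^2 * r)"
proof -
  assume r: "r \<ge> 3 * M"
  have rp: "r > 0" using r M by simp
  have hi: "((\<lambda>x. 1 / x ^ 2) has_integral 1 / (real (2 - 1) * r ^ (2 - 1))) {r..}"
    by (rule has_integral_inverse_power_to_inf) (use rp in auto)
  then have hi1: "((\<lambda>x. 1 / x ^ 2) has_integral 1 / r) {r..}" by simp
  have hi2: "((\<lambda>x. 1 / k^2 * (1 / x ^ 2)) has_integral 1 / k^2 * (1 / r)) {r..}"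
    by (rule has_integral_mult_right[OF hi1])
  have meas: "(\<lambda>s. s^2 / Delta M k s) \<in> borel_measurable (lebesgue_on {r..})"
    by (rule continuous_imp_measurable_on_sets_lebesgue[OF continuous_on_subset[OF f_cont]]) (use r in auto)
  have bnd: "norm (s^2 / Delta M k s) \<le> 1 / k^2 * (1 / s ^ 2)" if "s \<in> {r..}" for s
  proof -
    have s: "s \<ge> 3 * M" using that r by simp
    show ?thesis using f_le_inv[OF s] f_pos[OF s] by simp
  qed
  have i2: "(\<lambda>x. 1 / k^2 * (1 / x ^ 2)) integrable_on {r..}"
    using hi2 by (rule has_integral_integrable)
  show int: "(\<lambda>s. s^2 / Delta M k s) integrable_on {r..}"
    by (rule measurable_bounded_by_integrable_imp_integrable[OF meas i2 bnd])
       auto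
  have "integral {r..} (\<lambda>s. s^2 / Delta M k s) \<le> 1 / k^2 * (1 / r)"
  proof (rule has_integral_le[OF integrable_integral[OF int] hi2])
    fix s assume "s \<in> {r..}"
    then have s: "s \<ge> 3 * M" using r by simp
    show "s^2 / Delta M k s \<le> 1 / k^2 * (1 / s ^ 2)" using f_le_inv[OF s] .
  qed
  then show "integral {r..} (\<lambda>s. s^2 / Delta M k s) \<le> 1 / (k^2 * r)" by simp
qed

end


context
  fixes M k :: real
  assumes M: "M > 0" and k: "k > 0"
begin

abbreviation "ff \<equiv> (\<lambda>s. s^2 / Delta M k s)"

lemma rstar_split:
  assumes r1: "3 * M \<le> r1" and r12: "r1 \<le> r2"
  shows "rstar M k r2 - rstar M k r1 = integral {r1..r2} ff"
proof -
  have c: "continuous_on {r1..r2} ff"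
    by (rule continuous_on_subset[OF f_cont[OF M k]]) (use r1 in auto)
  have h1: "(ff has_integral integral {r1..r2} ff) {r1..r2}"
    using integrable_continuous_real[OF c] by (simp add: integrable_integral)
  have h2: "(ff has_integral integral {r2..} ff) {r2..}"
    using f_integrable[OF M k, of r2] r1 r12 by (simp add: integrable_integral)
  have "{r1..r2} \<inter> {r2..} = {r2}" using r12 by auto
  then have neg: "negligible ({r1..r2} \<inter> {r2..})" by simp
  have "(ff has_integral (integral {r1..r2} ff + integral {r2..} ff)) ({r1..r2} \<union> {r2..})"
    by (rule has_integral_Un[OF h1 h2 neg])
  moreover have "{r1..r2} \<union> {r2..} = {r1..}" using r12 by auto
  ultimately have "integral {r1..} ff = integral {r1..r2} ff + integral {r2..} ff"
    by (simp add: integral_unique)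
  then show ?thesis by (simp add: rstar_def)
qed

lemma rstar_strict:
  assumes r1: "3 * M \<le> r1" and r12: "r1 < r2"
  shows "rstar M k r1 < rstar M k r2"
proof -
  have c: "continuous_on {r1..r2} ff"
    by (rule continuous_on_subset[OF f_cont[OF M k]]) (use r1 in auto)
  have "integral {r1..r2} (\<lambda>s. 1 / (1 + k^2 * r2^2)) \<le> integral {r1..r2} ff"
  proof (rule integral_le)
    show "(\<lambda>s. 1 / (1 + k^2 * r2^2)) integrable_on {r1..r2}" by (intro integrable_continuous_real continuous_intros)
    show "ff integrable_on {r1..r2}" using integrable_continuous_real[OF c] .
    fix s assume s: "s \<in> {r1..r2}"
    then have s3: "s \<ge> 3 * M" using r1 by simp
    have "s \<ge> 0" using s3 M by simp
    then have "s^2 \<le> r2^2" using s by (simp add: power_mono)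
    then have "1 / (1 + k^2 * r2^2) \<le> 1 / (1 + k^2 * s^2)"
      by (intro divide_left_mono) (auto simp: add_pos_nonneg mult_left_mono)
    also have "\<dots> \<le> ff s" using f_ge[OF M k s3] .
    finally show "1 / (1 + k^2 * r2^2) \<le> ff s" .
  qed
  moreover have "integral {r1..r2} (\<lambda>s. 1 / (1 + k^2 * r2^2)) = (r2 - r1) / (1 + k^2 * r2^2)"
    using r12 by simp
  moreover have "(r2 - r1) / (1 + k^2 * r2^2) > 0" using r12 by (simp add: add_pos_nonneg)
  ultimately show ?thesis using rstar_split[OF r1 less_imp_le[OF r12]] by linarith
qed

lemma rstar_lip:
  assumes r1: "3 * M \<le> r1" and r12: "r1 \<le> r2"
  shows "rstar M k r2 - rstar M k r1 \<le> 3 * (r2 - r1)"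
proof -
  have c: "continuous_on {r1..r2} ff"
    by (rule continuous_on_subset[OF f_cont[OF M k]]) (use r1 in auto)
  have "integral {r1..r2} ff \<le> integral {r1..r2} (\<lambda>s. 3::real)"
  proof (rule integral_le)
    show "(\<lambda>s. 3::real) integrable_on {r1..r2}" by (intro integrable_continuous_real continuous_intros)
    show "ff integrable_on {r1..r2}" using integrable_continuous_real[OF c] .
    fix s assume s: "s \<in> {r1..r2}"
    then have s3: "s \<ge> 3 * M" using r1 by simp
    show "ff s \<le> 3" using f_le3[OF M k s3] .
  qed
  then show ?thesis using rstar_split[OF r1 r12] r12 by simp
qed

lemma rstar_lt: "r \<ge> 3 * M \<Longrightarrow> rstar M k r < pi / 2"
proof -
  assume r: "r \<ge> 3 * M"
  have "integral {r + 1..} ff \<ge> 0"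
    by (rule integral_nonneg[OF f_integrable[OF M k]]) (use r in \<open>auto intro!: less_imp_le[OF f_pos[OF M k]]\<close>)
  then have "rstar M k (r + 1) \<le> pi / 2" by (simp add: rstar_def)
  moreover have "rstar M k r < rstar M k (r + 1)" by (rule rstar_strict) (use r in auto)
  ultimately show ?thesis by simp
qed

lemma rstar_ge: "r \<ge> 3 * M \<Longrightarrow> rstar M k r \<ge> pi / 2 - 1 / (k^2 * r)"
  using f_integral_le[OF M k] by (simp add: rstar_def)

lemma rstar_cont: "continuous_on {3 * M..} (rstar M k)"
proof (rule lipschitz_on_continuous_on)
  show "3-lipschitz_on {3 * M..} (rstar M k)"
  proof (rule lipschitz_onI)
    fix x y assume x: "x \<in> {3 * M..}" and y: "y \<in> {3 * M..}"
    show "dist (rstar M k x) (rstar M k y) \<le> 3 * dist x y"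
    proof (cases "x \<le> y")
      case True
      have "rstar M k x \<le> rstar M k y"
        using rstar_strict[of x y] x True by (cases "x = y") auto
      then show ?thesis using rstar_lip[of x y] x True by (simp add: dist_real_def)
    next
      case False
      have "rstar M k y \<le> rstar M k x"
        using rstar_strict[of y x] y False by auto
      then show ?thesis using rstar_lip[of y x] y False by (simp add: dist_real_def)
    qed
  qed simp
qed

lemma a_lt: "rstar3M M k < pi / 2"
  unfolding rstar3M_def by (rule rstar_lt) simp

lemma rstar_surj:
  assumes x: "x \<in> {rstar3M M k..<pi / 2}"
  shows "\<exists>r\<ge>3 * M. rstar M k r = x"
proof -
  define R where "R = 3 * M + 1 / (k^2 * (pi / 2 - x))"
  have px: "pi / 2 - x > 0" using x by simp
  have R3: "R \<ge> 3 * M" using px k by (simp add: R_def)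
  have Rpos: "R > 0" using R3 M by simp
  have "1 / (k^2 * R) \<le> pi / 2 - x"
  proof -
    have "k^2 * (pi / 2 - x) > 0" using k px by simp
    moreover have "R \<ge> 1 / (k^2 * (pi / 2 - x))" using M by (simp add: R_def)
    ultimately have "k^2 * (pi / 2 - x) * R \<ge> 1"
      by (simp add: field_simps)
    then show ?thesis using Rpos k by (simp add: field_simps)
  qed
  then have "rstar M k R \<ge> x" using rstar_ge[OF R3] by simp
  moreover have "rstar M k (3 * M) \<le> x" using x by (simp add: rstar3M_def)
  ultimately obtain r where "r \<ge> 3 * M" "r \<le> R" "rstar M k r = x"
    using IVT'[of "rstar M k" "3 * M" x R] R3 continuous_on_subset[OF rstar_cont, of "{3 * M..R}"]
    by auto
  then show ?thesis by blast
qed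

lemma rstar_inj: "r1 \<ge> 3 * M \<Longrightarrow> r2 \<ge> 3 * M \<Longrightarrow> rstar M k r1 = rstar M k r2 \<Longrightarrow> r1 = r2"
  using rstar_strict by (metis less_irrefl linorder_neqE_linordered_idom)

lemma r_of_prop:
  assumes x: "x \<in> {rstar3M M k..<pi / 2}"
  shows "r_of M k x \<ge> 3 * M \<and> rstar M k (r_of M k x) = x"
proof -
  obtain r where r: "r \<ge> 3 * M" "rstar M k r = x" using rstar_surj[OF x] by blast
  show ?thesis unfolding r_of_def
    by (rule theI[of _ r]) (use r rstar_inj in auto)
qed

lemma r_of_gt:
  assumes x: "x \<in> {rstar3M M k..<pi / 2}" and r0: "r0 \<ge> 3 * M" and lt: "rstar M k r0 < x"
  shows "r_of M k x > r0"
proof (rule ccontr)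
  assume "\<not> r0 < r_of M k x"
  then have "r_of M k x \<le> r0" by simp
  then have "rstar M k (r_of M k x) \<le> rstar M k r0"
    using rstar_strict[of "r_of M k x" r0] r_of_prop[OF x] by (cases "r_of M k x = r0") auto
  then show False using r_of_prop[OF x] lt by simp
qed

lemma r_of_mono: "mono_on {rstar3M M k..<pi / 2} (r_of M k)"
proof (rule mono_onI)
  fix x y assume x: "x \<in> {rstar3M M k..<pi / 2}" and y: "y \<in> {rstar3M M k..<pi / 2}" and xy: "x \<le> y"
  show "r_of M k x \<le> r_of M k y"
  proof (rule ccontr)
    assume "\<not> r_of M k x \<le> r_of M k y"
    then have "rstar M k (r_of M k y) < rstar M k (r_of M k x)"
      using rstar_strict[of "r_of M k y" "r_of M k x"] r_of_prop[OF y] by simp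
    then show False using r_of_prop[OF x] r_of_prop[OF y] xy by simp
  qed
qed

end


lemma smooth_deriv_cont: "smooth_fun \<phi> \<Longrightarrow> continuous_on UNIV (deriv \<phi>)"
proof -
  assume s: "smooth_fun \<phi>"
  have "\<And>x. deriv \<phi> differentiable (at x)"
  proof -
    fix x
    have "(deriv ^^ 1) \<phi> differentiable (at x)" using s unfolding smooth_fun_def by blast
    then show "deriv \<phi> differentiable (at x)" by simp
  qed
  then show ?thesis
    by (simp add: continuous_at_imp_continuous_on differentiable_imp_continuous_within)
qed

lemma smooth_cont: "smooth_fun \<phi> \<Longrightarrow> continuous_on UNIV \<phi>"
proof -
  assume s: "smooth_fun \<phi>"
  have "\<And>x. \<phi> differentiable (at x)"
  proof -
    fix x
    have "(deriv ^^ 0) \<phi> differentiable (at x)" using s unfolding smooth_fun_def by blast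
    then show "\<phi> differentiable (at x)" by simp
  qed
  then show ?thesis
    by (simp add: continuous_at_imp_continuous_on differentiable_imp_continuous_within)
qed

lemma H10_g_sq:
  fixes a b :: real
  assumes H: "H10 a b R g"
  shows "(\<lambda>x. (g x)^2) integrable_on {a..b}"
proof -
  let ?S = "{a..b}"
  from H obtain \<phi> :: "nat \<Rightarrow> real \<Rightarrow> real" where
    tf: "\<And>n. test_fun a b (\<phi> n)" and
    i1: "\<And>n. (\<lambda>x. (\<phi> n x - R x)^2) integrable_on ?S" and
    i2: "\<And>n. (\<lambda>x. (deriv (\<phi> n) x - g x)^2) integrable_on ?S" and
    lim: "(\<lambda>n. integral ?S (\<lambda>x. (\<phi> n x - R x)^2) + integral ?S (\<lambda>x. (deriv (\<phi> n) x - g x)^2)) \<longlonglongrightarrow> 0"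
    unfolding H10_def by blast
  have dc: "continuous_on UNIV (deriv (\<phi> n))" for n
    using tf[of n] smooth_deriv_cont unfolding test_fun_def by blast
  define u where "u n x = indicator ?S x *\<^sub>R (deriv (\<phi> n) x - g x)^2" for n x
  have nn1: "integral ?S (\<lambda>x. (\<phi> n x - R x)^2) \<ge> 0" for n
    by (rule integral_nonneg[OF i1]) simp
  have nn2: "integral ?S (\<lambda>x. (deriv (\<phi> n) x - g x)^2) \<ge> 0" for n
    by (rule integral_nonneg[OF i2]) simp
  have lim2: "(\<lambda>n. integral ?S (\<lambda>x. (deriv (\<phi> n) x - g x)^2)) \<longlonglongrightarrow> 0"
  proof (rule tendsto_sandwich[OF _ _ tendsto_const lim])
    show "\<forall>\<^sub>F n in sequentially. 0 \<le> integral ?S (\<lambda>x. (deriv (\<phi> n) x - g x)^2)"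
      using nn2 by simp
    show "\<forall>\<^sub>F n in sequentially. integral ?S (\<lambda>x. (deriv (\<phi> n) x - g x)^2)
        \<le> integral ?S (\<lambda>x. (\<phi> n x - R x)^2) + integral ?S (\<lambda>x. (deriv (\<phi> n) x - g x)^2)"
      using nn1 by simp
  qed
  have si: "set_integrable lebesgue ?S (\<lambda>x. (deriv (\<phi> n) x - g x)^2)" for n
    using nonnegative_absolutely_integrable_1[OF i2[of n]] by simp
  have ui: "integrable lebesgue (u n)" for n
    using si[of n] unfolding set_integrable_def u_def .
  have uint: "(\<integral>x. norm (u n x) \<partial>lebesgue) = integral ?S (\<lambda>x. (deriv (\<phi> n) x - g x)^2)" for n
  proof -
    have "(\<integral>x. norm (u n x) \<partial>lebesgue) = (\<integral>x. u n x \<partial>lebesgue)"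
      by (rule Bochner_Integration.integral_cong) (auto simp: u_def indicator_def)
    also have "\<dots> = (LINT x:?S|lebesgue. (deriv (\<phi> n) x - g x)^2)"
      by (simp add: set_lebesgue_integral_def u_def)
    also have "\<dots> = integral ?S (\<lambda>x. (deriv (\<phi> n) x - g x)^2)"
      by (rule set_lebesgue_integral_eq_integral(2)[OF si])
    finally show ?thesis .
  qed
  have "(\<lambda>n. (\<integral>x. norm (u n x) \<partial>lebesgue)) \<longlonglongrightarrow> 0"
    unfolding uint using lim2 .
  then obtain r :: "nat \<Rightarrow> nat" where r: "strict_mono r"
    and ae: "AE x in lebesgue. (\<lambda>n. u (r n) x) \<longlonglongrightarrow> 0"
    using tendsto_L1_AE_subseq[of lebesgue u, OF ui] by blast
  obtain N where N1: "\<And>x. x \<in> space lebesgue - N \<Longrightarrow> (\<lambda>n. u (r n) x) \<longlonglongrightarrow> 0"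
    and N2: "N \<in> null_sets lebesgue"
    by (rule AE_E3[OF ae]) blast
  have negN: "negligible N" using N2 negligible_iff_null_sets by blast
  have conv: "(\<lambda>n. deriv (\<phi> (r n)) x) \<longlonglongrightarrow> g x" if x: "x \<in> ?S - N" for x
  proof -
    have "(\<lambda>n. u (r n) x) \<longlonglongrightarrow> 0" using N1 x by simp
    then have "(\<lambda>n. (deriv (\<phi> (r n)) x - g x)^2) \<longlonglongrightarrow> 0"
      using x by (simp add: u_def)
    then have "(\<lambda>n. sqrt ((deriv (\<phi> (r n)) x - g x)^2)) \<longlonglongrightarrow> sqrt 0"
      by (rule tendsto_real_sqrt)
    then have "(\<lambda>n. \<bar>deriv (\<phi> (r n)) x - g x\<bar>) \<longlonglongrightarrow> 0" by simp
    then have "(\<lambda>n. deriv (\<phi> (r n)) x - g x) \<longlonglongrightarrow> 0"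
      by (simp add: tendsto_rabs_zero_iff)
    then have "(\<lambda>n. (deriv (\<phi> (r n)) x - g x) + g x) \<longlonglongrightarrow> 0 + g x"
      by (intro tendsto_add tendsto_const)
    then show ?thesis by simp
  qed
  have Sl: "?S \<in> sets lebesgue" by simp
  have mo: "(\<lambda>x. deriv (\<phi> (r n)) x) measurable_on ?S" for n
    unfolding measurable_on_iff_borel_measurable[OF Sl]
    by (rule continuous_imp_measurable_on_sets_lebesgue[OF continuous_on_subset[OF dc]]) auto
  have "g measurable_on ?S"
    by (rule measurable_on_limit[OF mo negN conv])
  then have gm[measurable]: "g \<in> borel_measurable (lebesgue_on ?S)"
    using measurable_on_iff_borel_measurable[OF Sl] by blast
  have d0m[measurable]: "deriv (\<phi> 0) \<in> borel_measurable (lebesgue_on ?S)"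
    by (rule continuous_imp_measurable_on_sets_lebesgue[OF continuous_on_subset[OF dc]]) auto
  have c0: "(\<lambda>x. (deriv (\<phi> 0) x)^2) integrable_on ?S"
    by (intro integrable_continuous_real continuous_intros continuous_on_subset[OF dc[of 0]]) auto
  have bi: "(\<lambda>x. 2 * (deriv (\<phi> 0) x)^2 + 2 * (deriv (\<phi> 0) x - g x)^2) integrable_on ?S"
    using integrable_add[OF integrable_on_cmult_left[OF c0, of 2] integrable_on_cmult_left[OF i2[of 0], of 2]]
    by simp
  show ?thesis
  proof (rule measurable_bounded_by_integrable_imp_integrable[OF _ bi _ Sl])
    show "(\<lambda>x. (g x)^2) \<in> borel_measurable (lebesgue_on ?S)" by measurable
    fix x
    have "(g x)^2 \<le> 2 * (deriv (\<phi> 0) x)^2 + 2 * (deriv (\<phi> 0) x - g x)^2"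
      by (smt (verit) power2_diff zero_le_power2 power2_sum)
    then show "norm ((g x)^2) \<le> 2 * (deriv (\<phi> 0) x)^2 + 2 * (deriv (\<phi> 0) x - g x)^2" by simp
  qed
qed


lemma int_sq_pos:
  fixes a b :: real and R :: "real \<Rightarrow> real"
  assumes ab: "a < b" and c: "continuous_on {a..b} R" and x0: "x0 \<in> {a..b}" and nz: "R x0 \<noteq> 0"
  shows "integral {a..b} (\<lambda>x. (R x)^2) > 0"
proof -
  have ci: "continuous_on {a..b} (\<lambda>x. (R x)^2)" by (intro continuous_intros c)
  have int: "(\<lambda>x. (R x)^2) integrable_on {a..b}" by (rule integrable_continuous_real[OF ci])
  have ge: "integral {a..b} (\<lambda>x. (R x)^2) \<ge> 0" by (rule integral_nonneg[OF int]) simp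
  show ?thesis
  proof (rule ccontr)
    assume "\<not> ?thesis"
    then have "integral {a..b} (\<lambda>x. (R x)^2) = 0" using ge by simp
    then have h: "((\<lambda>x. (R x)^2) has_integral 0) (cbox a b)"
      using integrable_integral[OF int] by simp
    have "(R x0)^2 = 0"
      by (rule has_integral_0_cbox_imp_0[of a b "\<lambda>x. (R x)^2"]) (use ci h ab x0 in auto)
    then show False using nz by simp
  qed
qed

lemma neg_ab: "negligible (({a..b} - {a..<b}) \<union> ({a..<b} - {a..(b::real)}))"
proof -
  have "({a..b} - {a..<b}) \<union> ({a..<b} - {a..(b::real)}) \<subseteq> {b}" by auto
  then show ?thesis using negligible_subset negligible_sing by blast
qed

lemma int_ab_iff: "(f::real\<Rightarrow>real) integrable_on {a..b} \<longleftrightarrow> f integrable_on {a..<(b::real)}"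
  by (rule integrable_spike_set_eq[OF neg_ab])

lemma integral_ab: "integral {a..b} (f::real\<Rightarrow>real) = integral {a..<(b::real)} f"
proof -
  have "\<And>y. (f has_integral y) {a..b} \<longleftrightarrow> (f has_integral y) {a..<b}"
    by (rule has_integral_spike_set_eq) (rule negligible_subset[OF neg_ab], blast)+
  then show ?thesis unfolding integral_def using int_ab_iff[of f a b] by simp
qed

definition Lr :: "nat \<Rightarrow> real" where "Lr l = real l * (real l + 1)"

definition Vp :: "real \<Rightarrow> real \<Rightarrow> nat \<Rightarrow> real \<Rightarrow> real" where
  "Vp M k l x = wr M k (r_of M k x) * (real l * (real l + 1) - 6 * M / r_of M k x)"

context
  fixes M k :: real
  assumes M: "M > 0" and k: "k > 0"
begin

lemma wr_eq: "r \<noteq> 0 \<Longrightarrow> wr M k r = k^2 + (r^2 - 2 * M * r) / r^4"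
  by (simp add: wr_def Delta_def field_simps)

lemma wr_bounds:
  assumes r: "r \<ge> 3 * M"
  shows "k^2 \<le> wr M k r" "wr M k r \<le> k^2 + 1 / r^2"
proof -
  have rp: "r > 0" using r M by simp
  have "r^2 - 2 * M * r = r * (r - 2 * M)" by (simp add: power2_eq_square algebra_simps)
  moreover have "r * (r - 2 * M) \<ge> 0" using rp r M by simp
  ultimately have "(r^2 - 2 * M * r) / r^4 \<ge> 0" by simp
  then show "k^2 \<le> wr M k r" using wr_eq rp by simp
  have "(r^2 - 2 * M * r) / r^4 \<le> r^2 / r^4"
    using rp M by (intro divide_right_mono) auto
  also have "r^2 / r^4 = 1 / r^2" using rp by (simp add: power4_eq_xxxx power2_eq_square)
  finally show "wr M k r \<le> k^2 + 1 / r^2" using wr_eq rp by simp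
qed

lemma Vp_bounds:
  assumes x: "x \<in> {rstar3M M k..<pi / 2}" and l: "l \<ge> 1"
  shows "k^2 * (Lr l - 2) \<le> Vp M k l x"
    "Vp M k l x \<le> (k^2 + 1 / (r_of M k x)^2) * Lr l"
    "Vp M k l x \<ge> 0"
proof -
  define r where "r = r_of M k x"
  have r3: "r \<ge> 3 * M" using r_of_prop[OF M k x] r_def by simp
  have rp: "r > 0" using r3 M by simp
  have L2: "Lr l \<ge> 2"
  proof -
    have "real l \<ge> 1" using l by simp
    then have "real l * (real l + 1) \<ge> 1 * 2" by (intro mult_mono) auto
    then show ?thesis by (simp add: Lr_def)
  qed
  have q: "6 * M / r \<le> 2" using rp r3 by (simp add: field_simps)
  have q0: "6 * M / r \<ge> 0" using rp M by simp
  have w1: "k^2 \<le> wr M k r" and w2: "wr M k r \<le> k^2 + 1 / r^2" using wr_bounds[OF r3] by auto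
  have w0: "wr M k r \<ge> 0" using w1 zero_le_power2[of k] by linarith
  have V: "Vp M k l x = wr M k r * (Lr l - 6 * M / r)" by (simp add: Vp_def Lr_def r_def)
  show "k^2 * (Lr l - 2) \<le> Vp M k l x"
    unfolding V by (rule mult_mono) (use w1 w0 q L2 in auto)
  show "Vp M k l x \<le> (k^2 + 1 / (r_of M k x)^2) * Lr l"
    unfolding V r_def[symmetric] by (rule mult_mono) (use w0 w2 q0 q L2 in auto)
  show "Vp M k l x \<ge> 0"
    unfolding V using w0 q L2 by (intro mult_nonneg_nonneg) auto
qed

lemma r_of_meas: "r_of M k \<in> borel_measurable (lebesgue_on {rstar3M M k..<pi / 2})"
proof (rule borel_measurable_subalgebra)
  let ?S = "{rstar3M M k..<pi / 2}"
  have "sets borel \<subseteq> sets lebesgue" by force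
  then show "sets (restrict_space borel ?S) \<subseteq> sets (lebesgue_on ?S)"
    by (rule mono_restrict_space)
  show "space (restrict_space borel ?S) = space (lebesgue_on ?S)" by simp
  show "r_of M k \<in> borel_measurable (restrict_space borel ?S)"
    by (rule borel_measurable_mono_on_fnc[OF r_of_mono[OF M k]])
qed

lemma Vp_meas: "Vp M k l \<in> borel_measurable (lebesgue_on {rstar3M M k..<pi / 2})"
proof -
  note r_of_meas[measurable]
  show ?thesis unfolding Vp_def wr_def Delta_def by measurable
qed

lemma VR_int:
  assumes c: "continuous_on {rstar3M M k..pi / 2} R" and l: "l \<ge> 1"
  shows "(\<lambda>x. Vp M k l x * (R x)^2) integrable_on {rstar3M M k..<pi / 2}"
proof -
  let ?a = "rstar3M M k" and ?b = "pi / 2"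
  have Sl: "{?a..<?b} \<in> sets lebesgue" by simp
  have cR: "continuous_on {?a..<?b} R" by (rule continuous_on_subset[OF c]) auto
  have Rm[measurable]: "R \<in> borel_measurable (lebesgue_on {?a..<?b})"
    by (rule continuous_imp_measurable_on_sets_lebesgue[OF cR Sl])
  note Vp_meas[measurable]
  have m: "(\<lambda>x. Vp M k l x * (R x)^2) \<in> borel_measurable (lebesgue_on {?a..<?b})" by measurable
  define K where "K = (k^2 + 1 / (3 * M)^2) * Lr l"
  have R2: "(\<lambda>x. (R x)^2) integrable_on {?a..?b}"
    by (intro integrable_continuous_real continuous_intros c)
  then have R2': "(\<lambda>x. (R x)^2) integrable_on {?a..<?b}" using int_ab_iff by blast
  have gi: "(\<lambda>x. K * (R x)^2) integrable_on {?a..<?b}"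
    using integrable_on_cmult_left[OF R2', of K] by simp
  show ?thesis
  proof (rule measurable_bounded_by_integrable_imp_integrable[OF m gi _ Sl])
    fix x assume x: "x \<in> {?a..<?b}"
    have r3: "r_of M k x \<ge> 3 * M" using r_of_prop[OF M k x] by simp
    have "1 / (r_of M k x)^2 \<le> 1 / (3 * M)^2"
      using r3 M by (intro divide_left_mono power_mono) auto
    then have "(k^2 + 1 / (r_of M k x)^2) * Lr l \<le> K"
      unfolding K_def using Vp_bounds(1,3)[OF x l] by (intro mult_right_mono) (auto simp: Lr_def)
    then have "Vp M k l x \<le> K" using Vp_bounds(2)[OF x l] by linarith
    then have "Vp M k l x * (R x)^2 \<le> K * (R x)^2" by (intro mult_right_mono) auto
    then show "norm (Vp M k l x * (R x)^2) \<le> K * (R x)^2"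
      using Vp_bounds(3)[OF x l] by simp
  qed
qed

end


context
  fixes M k :: real
  assumes M: "M > 0" and k: "k > 0"
begin

lemma Lr_ge6: "l \<ge> 2 \<Longrightarrow> Lr l \<ge> 6"
proof -
  assume l: "l \<ge> 2"
  then have "real l \<ge> 2" by simp
  then have "real l * (real l + 1) \<ge> 2 * 3" by (intro mult_mono) auto
  then show ?thesis by (simp add: Lr_def)
qed

lemma ray_eq:
  "rayleigh M k l R g =
     (integral {rstar3M M k..pi / 2} (\<lambda>x. (g x)^2 + Vp M k l x * (R x)^2)
        + 6 * M * k^2 / (Lr l - 2) * (R (pi / 2))^2)
      / (integral {rstar3M M k..pi / 2} (\<lambda>x. (R x)^2) + 12 * M / (Lr l * (Lr l - 2)) * (R (pi / 2))^2)"
  by (simp add: rayleigh_def Let_def Lr_def Vp_def)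

lemma elem_lower:
  assumes l: "l \<ge> 2" and H: "H10 (rstar3M M k) (pi / 2) R g"
    and x0: "x0 \<in> {rstar3M M k..pi / 2}" and nz: "R x0 \<noteq> 0"
  shows "rayleigh M k l R g \<ge> k^2 * Lr l / 2"
proof -
  let ?a = "rstar3M M k" and ?b = "pi / 2"
  define L where "L = Lr l"
  have L6: "L \<ge> 6" using Lr_ge6[OF l] L_def by simp
  have ab: "?a < ?b" by (rule a_lt[OF M k])
  have cR: "continuous_on {?a..?b} R" using H unfolding H10_def by blast
  have G: "(\<lambda>x. (g x)^2) integrable_on {?a..?b}" by (rule H10_g_sq[OF H])
  have VI': "(\<lambda>x. Vp M k l x * (R x)^2) integrable_on {?a..<?b}"
    by (rule VR_int[OF M k cR]) (use l in simp)
  then have VI: "(\<lambda>x. Vp M k l x * (R x)^2) integrable_on {?a..?b}" using int_ab_iff by blast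
  have R2: "(\<lambda>x. (R x)^2) integrable_on {?a..?b}"
    by (intro integrable_continuous_real continuous_intros cR)
  then have R2': "(\<lambda>x. (R x)^2) integrable_on {?a..<?b}" using int_ab_iff by blast
  define B where "B = integral {?a..?b} (\<lambda>x. (R x)^2)"
  have Bpos: "B > 0" unfolding B_def by (rule int_sq_pos[OF ab cR x0 nz])
  define I where "I = integral {?a..?b} (\<lambda>x. (g x)^2 + Vp M k l x * (R x)^2)"
  have Isplit: "I = integral {?a..?b} (\<lambda>x. (g x)^2) + integral {?a..?b} (\<lambda>x. Vp M k l x * (R x)^2)"
    unfolding I_def by (rule integral_add[OF G VI])
  have G0: "integral {?a..?b} (\<lambda>x. (g x)^2) \<ge> 0" by (rule integral_nonneg[OF G]) simp
  have "integral {?a..<?b} (\<lambda>x. (k^2 * (L - 2)) * (R x)^2) \<le> integral {?a..<?b} (\<lambda>x. Vp M k l x * (R x)^2)"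
  proof (rule integral_le)
    show "(\<lambda>x. (k^2 * (L - 2)) * (R x)^2) integrable_on {?a..<?b}"
      using integrable_on_cmult_left[OF R2', of "k^2 * (L - 2)"] by simp
    show "(\<lambda>x. Vp M k l x * (R x)^2) integrable_on {?a..<?b}" by (rule VI')
    fix x assume x: "x \<in> {?a..<?b}"
    have "k^2 * (L - 2) \<le> Vp M k l x" using Vp_bounds(1)[OF M k x] l L_def by simp
    then show "(k^2 * (L - 2)) * (R x)^2 \<le> Vp M k l x * (R x)^2" by (intro mult_right_mono) auto
  qed
  then have iV: "k^2 * (L - 2) * B \<le> integral {?a..?b} (\<lambda>x. Vp M k l x * (R x)^2)"
    unfolding B_def integral_ab[of ?a ?b] by simp
  have "k^2 * 4 \<le> k^2 * L" using L6 by (intro mult_left_mono) auto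
  then have kL: "k^2 * (L - 2) \<ge> k^2 * L / 2" by (simp add: field_simps)
  have "k^2 * L / 2 * B \<le> k^2 * (L - 2) * B" using kL Bpos by (intro mult_right_mono) auto
  then have IB: "I \<ge> k^2 * L / 2 * B" using Isplit G0 iV by linarith
  define C where "C = (R ?b)^2"
  have C0: "C \<ge> 0" by (simp add: C_def)
  define c2 where "c2 = 12 * M / (L * (L - 2))"
  have c20: "c2 \<ge> 0" using L6 M by (simp add: c2_def)
  have c1: "6 * M * k^2 / (L - 2) = k^2 * L / 2 * c2" using L6 by (simp add: c2_def field_simps)
  have D: "B + c2 * C > 0" using Bpos c20 C0 by (simp add: add_pos_nonneg)
  have num: "I + 6 * M * k^2 / (L - 2) * C \<ge> k^2 * L / 2 * (B + c2 * C)"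
    unfolding c1 using IB by (simp add: algebra_simps)
  have "rayleigh M k l R g = (I + 6 * M * k^2 / (L - 2) * C) / (B + c2 * C)"
    by (simp add: ray_eq I_def B_def C_def c2_def L_def)
  also have "\<dots> \<ge> k^2 * L / 2" using num D by (simp add: pos_le_divide_eq)
  finally show ?thesis by (simp add: L_def)
qed

end


context
  fixes M k :: real
  assumes M: "M > 0" and k: "k > 0"
begin

lemma elem_upper:
  assumes eta: "\<eta> > 0"
  shows "\<exists>R g. H10 (rstar3M M k) (pi / 2) R g \<and> (\<exists>x\<in>{rstar3M M k..pi / 2}. R x \<noteq> 0) \<and>
           (\<forall>\<^sub>F l in sequentially. rayleigh M k l R g \<le> (k^2 + \<eta>) * Lr l)"
proof -
  let ?a = "rstar3M M k" and ?b = "pi / 2"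
  define r0 where "r0 = 3 * M + 2 / \<eta> + 1"
  have r03: "r0 > 3 * M" using eta by (simp add: r0_def add_pos_pos)
  define c where "c = rstar M k r0"
  have ac: "?a < c" unfolding c_def rstar3M_def by (rule rstar_strict[OF M k]) (use r03 in auto)
  have cb: "c < ?b" unfolding c_def by (rule rstar_lt[OF M k]) (use r03 in auto)
  define \<phi> where "\<phi> = Fp 1 c"
  have phi0: "\<phi> x = 0" if "x \<le> c" for x using that by (simp add: \<phi>_def Fp_def)
  have phib: "\<phi> ?b > 0" using cb by (simp add: \<phi>_def Fp_def)
  have sm: "smooth_fun \<phi>" unfolding \<phi>_def by (rule smooth_Fp)
  have cphi: "continuous_on UNIV \<phi>" by (rule smooth_cont[OF sm])
  have cdphi: "continuous_on UNIV (deriv \<phi>)" by (rule smooth_deriv_cont[OF sm])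
  have H: "H10 ?a ?b \<phi> (deriv \<phi>)"
    unfolding H10_def
  proof (intro conjI exI[of _ "\<lambda>n. \<phi>"])
    show "continuous_on {?a..?b} \<phi>" using continuous_on_subset[OF cphi] by blast
    show "\<forall>n. test_fun ?a ?b \<phi>"
      unfolding test_fun_def using sm ac phi0 by (auto intro!: exI[of _ "c - ?a"])
  qed auto
  have ab: "?a < ?b" using ac cb by simp
  have nzb: "\<exists>x\<in>{?a..?b}. \<phi> x \<noteq> 0"
  proof (rule bexI[of _ ?b])
    show "\<phi> ?b \<noteq> 0" using phib by simp
    show "?b \<in> {?a..?b}" using ab by simp
  qed
  define A where "A = integral {?a..?b} (\<lambda>x. (deriv \<phi> x)^2)"
  define B where "B = integral {?a..?b} (\<lambda>x. (\<phi> x)^2)"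
  define C where "C = (\<phi> ?b)^2"
  have Ai: "(\<lambda>x. (deriv \<phi> x)^2) integrable_on {?a..?b}"
    by (intro integrable_continuous_real continuous_intros continuous_on_subset[OF cdphi]) auto
  have A0: "A \<ge> 0" unfolding A_def by (rule integral_nonneg[OF Ai]) simp
  have Bpos: "B > 0" unfolding B_def
    by (rule int_sq_pos[OF ab continuous_on_subset[OF cphi], of ?b]) (use phib ab in auto)
  have C0: "C \<ge> 0" by (simp add: C_def)
  have cphi': "continuous_on {?a..?b} \<phi>" using continuous_on_subset[OF cphi] by blast
  have R2: "(\<lambda>x. (\<phi> x)^2) integrable_on {?a..?b}"
    by (intro integrable_continuous_real continuous_intros cphi')
  then have R2': "(\<lambda>x. (\<phi> x)^2) integrable_on {?a..<?b}" using int_ab_iff by blast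
  define N0 where "N0 = nat \<lceil>2 * (A + 2 * M * k^2 * C) / (\<eta> * B)\<rceil> + 2"
  have "rayleigh M k l \<phi> (deriv \<phi>) \<le> (k^2 + \<eta>) * Lr l" if l: "l \<ge> N0" for l
  proof -
    define L where "L = Lr l"
    have l2: "l \<ge> 2" using l by (simp add: N0_def)
    have L6: "L \<ge> 6" using Lr_ge6[OF M k l2] L_def by simp
    have Ll: "L \<ge> real l"
    proof -
      have "real l * 1 \<le> real l * (real l + 1)" by (intro mult_left_mono) auto
      then show ?thesis by (simp add: L_def Lr_def)
    qed
    have "real l \<ge> 2 * (A + 2 * M * k^2 * C) / (\<eta> * B)"
    proof -
      define X where "X = 2 * (A + 2 * M * k^2 * C) / (\<eta> * B)"
      have "nat \<lceil>X\<rceil> \<le> l" using l unfolding N0_def X_def by linarith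
      then have "real (nat \<lceil>X\<rceil>) \<le> real l" by (rule of_nat_mono)
      moreover have "X \<le> real (nat \<lceil>X\<rceil>)" by linarith
      ultimately show ?thesis unfolding X_def by linarith
    qed
    then have LB: "L \<ge> 2 * (A + 2 * M * k^2 * C) / (\<eta> * B)" using Ll by linarith
    have etaB: "\<eta> * B > 0" using eta Bpos by simp
    have key: "A + 2 * M * k^2 * C \<le> \<eta> / 2 * L * B"
    proof -
      have "2 * (A + 2 * M * k^2 * C) \<le> L * (\<eta> * B)" using LB etaB by (simp add: pos_divide_le_eq)
      then show ?thesis by (simp add: algebra_simps)
    qed
    have VI': "(\<lambda>x. Vp M k l x * (\<phi> x)^2) integrable_on {?a..<?b}"
      by (rule VR_int[OF M k cphi']) (use l2 in simp)
    then have VI: "(\<lambda>x. Vp M k l x * (\<phi> x)^2) integrable_on {?a..?b}" using int_ab_iff by blast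
    have "integral {?a..<?b} (\<lambda>x. Vp M k l x * (\<phi> x)^2) \<le> integral {?a..<?b} (\<lambda>x. ((k^2 + \<eta> / 2) * L) * (\<phi> x)^2)"
    proof (rule integral_le[OF VI'])
      show "(\<lambda>x. ((k^2 + \<eta> / 2) * L) * (\<phi> x)^2) integrable_on {?a..<?b}"
        using integrable_on_cmult_left[OF R2', of "(k^2 + \<eta> / 2) * L"] by simp
      fix x assume x: "x \<in> {?a..<?b}"
      show "Vp M k l x * (\<phi> x)^2 \<le> ((k^2 + \<eta> / 2) * L) * (\<phi> x)^2"
      proof (cases "x \<le> c")
        case True then show ?thesis using phi0 by simp
      next
        case False
        define r where "r = r_of M k x"
        have rr: "r > r0" unfolding r_def c_def
          by (rule r_of_gt[OF M k x]) (use r03 False c_def in auto)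
        have r1: "r \<ge> 1" using rr M eta by (simp add: r0_def) (smt (verit) divide_pos_pos)
        have re: "r * \<eta> > 2"
        proof -
          have "r > 2 / \<eta>" using rr M eta by (simp add: r0_def)
          then show ?thesis using eta by (simp add: field_simps)
        qed
        have "1 / r^2 \<le> 1 / r" using r1 by (simp add: power2_eq_square field_simps)
        also have "1 / r \<le> \<eta> / 2" using re r1 by (simp add: field_simps)
        finally have ir: "1 / r^2 \<le> \<eta> / 2" .
        have "Vp M k l x \<le> (k^2 + 1 / r^2) * L"
          using Vp_bounds(2)[OF M k x] l2 by (simp add: r_def L_def)
        also have "\<dots> \<le> (k^2 + \<eta> / 2) * L" using ir L6 by (intro mult_right_mono) auto
        finally show ?thesis by (intro mult_right_mono) auto
      qed
    qed
    then have iV: "integral {?a..?b} (\<lambda>x. Vp M k l x * (\<phi> x)^2) \<le> (k^2 + \<eta> / 2) * L * B"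
      unfolding B_def integral_ab[of ?a ?b] by simp
    define I where "I = integral {?a..?b} (\<lambda>x. (deriv \<phi> x)^2 + Vp M k l x * (\<phi> x)^2)"
    have Isplit: "I = A + integral {?a..?b} (\<lambda>x. Vp M k l x * (\<phi> x)^2)"
      unfolding I_def A_def by (rule integral_add[OF Ai VI])
    have c1: "6 * M * k^2 / (L - 2) \<le> 2 * M * k^2"
    proof -
      have "6 * M * k^2 \<le> 2 * M * k^2 * (L - 2)" using L6 M k by (simp add: mult_left_mono)
      then show ?thesis using L6 by (simp add: pos_divide_le_eq)
    qed
    have "6 * M * k^2 / (L - 2) * C \<le> 2 * M * k^2 * C" using c1 C0 by (rule mult_right_mono)
    then have Nle: "I + 6 * M * k^2 / (L - 2) * C \<le> (k^2 + \<eta>) * L * B"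
      using Isplit iV key by (simp add: algebra_simps)
    define c2 where "c2 = 12 * M / (L * (L - 2))"
    have c20: "c2 \<ge> 0" using L6 M by (simp add: c2_def)
    have DB: "B + c2 * C \<ge> B" using c20 C0 by simp
    have RHS0: "(k^2 + \<eta>) * L \<ge> 0" using L6 eta by simp
    have "rayleigh M k l \<phi> (deriv \<phi>) = (I + 6 * M * k^2 / (L - 2) * C) / (B + c2 * C)"
      by (simp add: ray_eq[OF M k] I_def B_def C_def c2_def L_def)
    also have "\<dots> \<le> (k^2 + \<eta>) * L"
    proof (cases "I + 6 * M * k^2 / (L - 2) * C \<le> 0")
      case True
      then have "(I + 6 * M * k^2 / (L - 2) * C) / (B + c2 * C) \<le> 0"
        using DB Bpos by (simp add: divide_nonpos_pos)
      then show ?thesis using RHS0 by linarith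
    next
      case False
      then have "(I + 6 * M * k^2 / (L - 2) * C) / (B + c2 * C) \<le> (I + 6 * M * k^2 / (L - 2) * C) / B"
        using DB Bpos by (intro divide_left_mono) auto
      also have "\<dots> \<le> (k^2 + \<eta>) * L" using Nle Bpos by (simp add: pos_divide_le_eq)
      finally show ?thesis .
    qed
    finally show ?thesis by (simp add: L_def)
  qed
  then have "\<forall>\<^sub>F l in sequentially. rayleigh M k l \<phi> (deriv \<phi>) \<le> (k^2 + \<eta>) * Lr l"
    using eventually_sequentially by blast
  then show ?thesis using H nzb by blast
qed

end


theorem lemma4p11:
  fixes M k \<eta> :: real
  assumes "M > 0" and "k > 0" and "\<eta> > 0"
  shows "\<forall>\<^sub>F l in sequentially.
           k^2 / 2 \<le> omega2 M k l / (real l * (real l + 1)) \<and>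
           omega2 M k l / (real l * (real l + 1)) \<le> k^2 + \<eta>"
proof -
  note M = assms(1) and k = assms(2) and eta = assms(3)
  obtain R g where H: "H10 (rstar3M M k) (pi / 2) R g"
    and nz: "\<exists>x\<in>{rstar3M M k..pi / 2}. R x \<noteq> 0"
    and ev: "\<forall>\<^sub>F l in sequentially. rayleigh M k l R g \<le> (k^2 + \<eta>) * Lr l"
    using elem_upper[OF M k eta] by blast
  have ev2: "\<forall>\<^sub>F l in sequentially. (2::nat) \<le> l" by (rule eventually_ge_at_top)
  show ?thesis
    using eventually_conj[OF ev ev2]
  proof (rule eventually_mono)
    fix l :: nat
    assume a: "rayleigh M k l R g \<le> (k^2 + \<eta>) * Lr l \<and> 2 \<le> l"
    then have l: "l \<ge> 2" and up: "rayleigh M k l R g \<le> (k^2 + \<eta>) * Lr l" by auto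
    define S where "S = {rayleigh M k l R g | R g.
      H10 (rstar3M M k) (pi / 2) R g \<and> (\<exists>x\<in>{rstar3M M k .. pi / 2}. R x \<noteq> 0)}"
    have om: "omega2 M k l = Inf S" by (simp add: omega2_def S_def)
    have eS: "rayleigh M k l R g \<in> S" unfolding S_def using H nz by blast
    have low: "k^2 * Lr l / 2 \<le> y" if "y \<in> S" for y
      using that elem_lower[OF M k l] unfolding S_def by blast
    have bdd: "bdd_below S" by (rule bdd_belowI[of _ "k^2 * Lr l / 2"]) (rule low)
    have i1: "k^2 * Lr l / 2 \<le> Inf S"
      by (rule cInf_greatest) (use eS low in auto)
    have i2: "Inf S \<le> (k^2 + \<eta>) * Lr l"
      using cInf_lower[OF eS bdd] up by linarith
    have Lpos: "Lr l > 0" using Lr_ge6[OF M k l] by simp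
    have LL: "real l * (real l + 1) = Lr l" by (simp add: Lr_def)
    show "k^2 / 2 \<le> omega2 M k l / (real l * (real l + 1)) \<and>
          omega2 M k l / (real l * (real l + 1)) \<le> k^2 + \<eta>"
      unfolding LL om using i1 i2 Lpos by (simp add: pos_le_divide_eq pos_divide_le_eq)
  qed
qed


end
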